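(* Let $M$ be an $R$-module and $S=R\setminus W_R(M)$. (a) If $S^{-1}R=R$, then $M$ satisfies the dual of proper strong Property $\mathcal{A}$ if and only if $M$ satisfies the dual of Property $\mathcal{A}$. (b) If $S^{-1}R\neq R$, then $M$ satisfies the dual of proper strong Property $\mathcal{A}$ if and only if $M$ satisfies the dual of strong Property $\mathcal{A}$.
   Context: All rings are commutative with identity. For an $R$-module $M$, $W_R(M)=\{r\in R : rM\neq M\}$. $M$ satisfies the dual of Property $\mathcal{A}$ if for every finitely generated ideal $I$ of $R$ with $I\subseteq W_R(M)$ we have $IM\neq M$. $M$ satisfies the dual of proper strong Property $\mathcal{A}$ if for every proper finitely generated ideal $I=\langle a_1,\dots,a_n\rangle$ of $R$ with $a_i\in W_R(M)$ for all $i$, we have $IM\neq M$. A proper submodule $L$ of $M$ is completely irreducible if whenever $L=\bigcap_{i\in I}L_i$ for a family $\{L_i\}$ of submodules, then $L=L_i$ for some $i$. $M$ satisfies the dual of strong Property $\mathcal{A}$ if for any $a_1,\dots,a_n\in W_R(M)$ there is a completely irreducible submodule $L$ of $M$ with $a_iM\subseteq L\neq M$ for all $i$. For a multiplicatively closed set $S$, "$S^{-1}R=R$" means that the canonical map $R\to S^{-1}R$ is an isomorphism (equivalently every element of $S$ is a unit of $R$). *)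

theory Defs
  imports Complex_Main
begin

text \<open>An R-module M is modelled by a scalar multiplication
  scale :: 'r::comm_ring_1 => 'm::ab_group_add satisfying the locale module.\<close>

definition W_R :: "('r::comm_ring_1 \<Rightarrow> 'm::ab_group_add \<Rightarrow> 'm) \<Rightarrow> 'r set" where
  "W_R scale = {r. range (scale r) \<noteq> UNIV}"

definition gen_ideal :: "'r::comm_ring_1 set \<Rightarrow> 'r set" where
  "gen_ideal A = module.span ((*)) A"

definition ideal_mult :: "('r::comm_ring_1 \<Rightarrow> 'm::ab_group_add \<Rightarrow> 'm) \<Rightarrow> 'r set \<Rightarrow> 'm set" where
  "ideal_mult scale I = module.span scale {scale a m | a m. a \<in> I}"

definition completely_irreducible :: "('r::comm_ring_1 \<Rightarrow> 'm::ab_group_add \<Rightarrow> 'm) \<Rightarrow> 'm set \<Rightarrow> bool" where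
  "completely_irreducible scale L \<longleftrightarrow>
     module.subspace scale L \<and> L \<noteq> UNIV \<and>
     (\<forall>F. (\<forall>X\<in>F. module.subspace scale X) \<and> L = \<Inter>F \<longrightarrow> L \<in> F)"

definition dual_property_A :: "('r::comm_ring_1 \<Rightarrow> 'm::ab_group_add \<Rightarrow> 'm) \<Rightarrow> bool" where
  "dual_property_A scale \<longleftrightarrow>
     (\<forall>A. finite A \<and> gen_ideal A \<subseteq> W_R scale \<longrightarrow> ideal_mult scale (gen_ideal A) \<noteq> UNIV)"

definition dual_proper_strong_property_A :: "('r::comm_ring_1 \<Rightarrow> 'm::ab_group_add \<Rightarrow> 'm) \<Rightarrow> bool" where
  "dual_proper_strong_property_A scale \<longleftrightarrow>
     (\<forall>A. finite A \<and> A \<noteq> {} \<and> A \<subseteq> W_R scale \<and> gen_ideal A \<noteq> UNIV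
          \<longrightarrow> ideal_mult scale (gen_ideal A) \<noteq> UNIV)"

definition dual_strong_property_A :: "('r::comm_ring_1 \<Rightarrow> 'm::ab_group_add \<Rightarrow> 'm) \<Rightarrow> bool" where
  "dual_strong_property_A scale \<longleftrightarrow>
     (\<forall>A. finite A \<and> A \<noteq> {} \<and> A \<subseteq> W_R scale \<longrightarrow>
        (\<exists>L. completely_irreducible scale L \<and> (\<forall>a\<in>A. range (scale a) \<subseteq> L)))"

end

theory Submission
  imports Defs
begin

lemma mod_R: "module ((*) :: 'r::comm_ring_1 \<Rightarrow> 'r \<Rightarrow> 'r)"
  by unfold_locales (auto simp: algebra_simps)

lemma gi_base: "A \<subseteq> gen_ideal A"
  unfolding gen_ideal_def using module.span_superset[OF mod_R] by blast

lemma gi_mult: "x \<in> gen_ideal A \<Longrightarrow> c * x \<in> gen_ideal A"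
  unfolding gen_ideal_def using module.span_scale[OF mod_R] by blast

lemma gi_unit: "u \<in> gen_ideal A \<Longrightarrow> u dvd 1 \<Longrightarrow> gen_ideal A = UNIV"
proof -
  assume u: "u \<in> gen_ideal A" "u dvd 1"
  then obtain v where "1 = u * v" by (auto elim: dvdE)
  hence one: "1 \<in> gen_ideal A" using gi_mult[OF u(1), of v] by (simp add: mult.commute)
  show ?thesis
  proof (rule set_eqI, simp)
    fix x show "x \<in> gen_ideal A" using gi_mult[OF one, of x] by simp
  qed
qed

lemma gi_insert0: "gen_ideal (insert 0 A) = gen_ideal A"
proof -
  interpret R: module "(*) :: 'a \<Rightarrow> 'a \<Rightarrow> 'a" by (rule mod_R)
  have "R.span (insert 0 A) \<subseteq> R.span A"
    by (rule R.span_minimal) (auto intro: R.span_zero R.span_base)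
  moreover have "R.span A \<subseteq> R.span (insert 0 A)"
    by (rule R.span_minimal) (auto intro: R.span_base)
  ultimately show ?thesis unfolding gen_ideal_def by blast
qed

lemma gi_principal: "1 \<in> gen_ideal ((*) s ` A) \<Longrightarrow> s dvd 1"
proof -
  interpret R: module "(*) :: 'a \<Rightarrow> 'a \<Rightarrow> 'a" by (rule mod_R)
  assume h: "1 \<in> gen_ideal ((*) s ` A)"
  have "R.span ((*) s ` A) \<subseteq> {x. s dvd x}"
    by (rule R.span_minimal) (auto simp: R.subspace_def)
  with h show ?thesis unfolding gen_ideal_def by blast
qed

lemma gi_times: "x \<in> gen_ideal A \<Longrightarrow> s * x \<in> gen_ideal ((*) s ` A)"
proof -
  interpret R: module "(*) :: 'a \<Rightarrow> 'a \<Rightarrow> 'a" by (rule mod_R)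
  assume h: "x \<in> gen_ideal A"
  have "R.span A \<subseteq> {x. s * x \<in> R.span ((*) s ` A)}"
  proof (rule R.span_minimal)
    show "A \<subseteq> {x. s * x \<in> R.span ((*) s ` A)}" by (auto intro: R.span_base)
    show "R.subspace {x. s * x \<in> R.span ((*) s ` A)}"
      unfolding R.subspace_def
    proof (intro conjI ballI allI)
      show "0 \<in> {x. s * x \<in> R.span ((*) s ` A)}" using R.span_zero by simp
      fix x y assume "x \<in> {x. s * x \<in> R.span ((*) s ` A)}" "y \<in> {x. s * x \<in> R.span ((*) s ` A)}"
      thus "x + y \<in> {x. s * x \<in> R.span ((*) s ` A)}" using R.span_add by (simp add: distrib_left)
    next
      fix c x assume "x \<in> {x. s * x \<in> R.span ((*) s ` A)}"
      hence "c * (s * x) \<in> R.span ((*) s ` A)" using R.span_scale[of "s * x" _ c] by simp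
      moreover have "s * (c * x) = c * (s * x)" by (rule mult.left_commute)
      ultimately have "s * (c * x) \<in> R.span ((*) s ` A)" by (simp only:)
      thus "c * x \<in> {x. s * x \<in> R.span ((*) s ` A)}" by (rule CollectI)
    qed
  qed
  with h show ?thesis unfolding gen_ideal_def by blast
qed

context module begin

lemma im_sub: "a \<in> I \<Longrightarrow> range (scale a) \<subseteq> ideal_mult scale I"
proof
  fix y assume a: "a \<in> I" and "y \<in> range (scale a)"
  then obtain m where "y = scale a m" by blast
  hence "y \<in> {scale a m | a m. a \<in> I}" using a by blast
  thus "y \<in> ideal_mult scale I" unfolding ideal_mult_def by (rule span_base)
qed

lemma im_gen_sub:
  assumes L: "subspace L" and A: "\<forall>a\<in>A. range (scale a) \<subseteq> L"
  shows "ideal_mult scale (gen_ideal A) \<subseteq> L"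
proof -
  interpret R: module "(*) :: 'a \<Rightarrow> 'a \<Rightarrow> 'a" by (rule mod_R)
  have "R.span A \<subseteq> {a. range (scale a) \<subseteq> L}"
  proof (rule R.span_minimal)
    show "A \<subseteq> {a. range (scale a) \<subseteq> L}" using A by auto
    show "R.subspace {a. range (scale a) \<subseteq> L}"
      unfolding R.subspace_def
    proof (intro conjI ballI allI)
      show "0 \<in> {a. range (scale a) \<subseteq> L}" using L by (auto simp: subspace_def)
      fix x y assume "x \<in> {a. range (scale a) \<subseteq> L}" "y \<in> {a. range (scale a) \<subseteq> L}"
      thus "x + y \<in> {a. range (scale a) \<subseteq> L}" using L
        by (auto simp: subspace_def scale_left_distrib)
    next
      fix c x assume "x \<in> {a. range (scale a) \<subseteq> L}"
      thus "c * x \<in> {a. range (scale a) \<subseteq> L}"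
        by (auto simp: mult.commute[of c] simp flip: scale_scale)
    qed
  qed
  hence "{scale a m |a m. a \<in> gen_ideal A} \<subseteq> L" unfolding gen_ideal_def by blast
  thus ?thesis unfolding ideal_mult_def using span_minimal[OF _ L] by blast
qed

lemma exists_ci:
  assumes N: "subspace N" "N \<noteq> UNIV"
  shows "\<exists>L. completely_irreducible scale L \<and> N \<subseteq> L"
proof -
  obtain m where m: "m \<notin> N" using N by blast
  define C where "C = {L. subspace L \<and> N \<subseteq> L \<and> m \<notin> L}"
  have "\<exists>M\<in>C. \<forall>X\<in>C. M \<subseteq> X \<longrightarrow> X = M"
  proof (rule Zorn_Lemma2, rule ballI)
    fix Ch assume ch: "Ch \<in> chains C"
    show "\<exists>U\<in>C. \<forall>X\<in>Ch. X \<subseteq> U"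
    proof (cases "Ch = {}")
      case True thus ?thesis using N m unfolding C_def by auto
    next
      case False
      have sub: "Ch \<subseteq> C" and chn: "\<forall>A\<in>Ch. \<forall>B\<in>Ch. A \<subseteq> B \<or> B \<subseteq> A"
        using ch unfolding chains_def chain_subset_def by auto
      have "subspace (\<Union>Ch)"
      proof (rule subspaceI)
        show "0 \<in> \<Union>Ch" using False sub unfolding C_def subspace_def by auto
        fix x y assume "x \<in> \<Union>Ch" "y \<in> \<Union>Ch"
        then obtain X Y where XY: "X \<in> Ch" "Y \<in> Ch" "x \<in> X" "y \<in> Y" by auto
        have sX: "subspace X" and sY: "subspace Y" using XY(1,2) sub unfolding C_def by auto
        from chn XY(1,2) have "X \<subseteq> Y \<or> Y \<subseteq> X" by blast
        thus "x + y \<in> \<Union>Ch"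
        proof
          assume "X \<subseteq> Y"
          hence "x + y \<in> Y" using sY XY(3,4) unfolding subspace_def by blast
          thus ?thesis using XY(2) by blast
        next
          assume "Y \<subseteq> X"
          hence "x + y \<in> X" using sX XY(3,4) unfolding subspace_def by blast
          thus ?thesis using XY(1) by blast
        qed
      next
        fix c x assume "x \<in> \<Union>Ch"
        then obtain X where X: "X \<in> Ch" "x \<in> X" by auto
        hence "subspace X" using sub unfolding C_def by auto
        hence "c *s x \<in> X" using X(2) unfolding subspace_def by blast
        thus "c *s x \<in> \<Union>Ch" using X(1) by blast
      qed
      moreover have "N \<subseteq> \<Union>Ch" using False sub unfolding C_def by auto
      moreover have "m \<notin> \<Union>Ch" using sub unfolding C_def by auto
      ultimately show ?thesis unfolding C_def by auto
    qed
  qed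
  then obtain L where L: "L \<in> C" and max: "\<forall>X\<in>C. L \<subseteq> X \<longrightarrow> X = L" by blast
  have "completely_irreducible scale L"
    unfolding completely_irreducible_def
  proof (intro conjI allI impI)
    show "subspace L" "L \<noteq> UNIV" using L unfolding C_def by auto
    fix F assume F: "(\<forall>X\<in>F. subspace X) \<and> L = \<Inter>F"
    show "L \<in> F"
    proof (rule ccontr)
      assume nF: "L \<notin> F"
      have "\<forall>X\<in>F. m \<in> X"
      proof
        fix X assume X: "X \<in> F"
        hence "L \<subseteq> X" using F by auto
        moreover have "X \<noteq> L" using X nF by auto
        ultimately have "X \<notin> C" using max by auto
        thus "m \<in> X" using X F L \<open>L \<subseteq> X\<close> unfolding C_def by auto
      qed
      hence "m \<in> L" using F by auto
      thus False using L unfolding C_def by auto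
    qed
  qed
  thus ?thesis using L unfolding C_def by auto
qed

end

theorem theorem3p8:
  fixes scale :: "'r::comm_ring_1 \<Rightarrow> 'm::ab_group_add \<Rightarrow> 'm"
  assumes "module scale"
  defines "S \<equiv> UNIV - W_R scale"
  shows "((\<forall>s\<in>S. s dvd 1) \<longrightarrow>
            (dual_proper_strong_property_A scale \<longleftrightarrow> dual_property_A scale))
       \<and> (\<not> (\<forall>s\<in>S. s dvd 1) \<longrightarrow>
            (dual_proper_strong_property_A scale \<longleftrightarrow> dual_strong_property_A scale))"
proof -
  interpret module scale by fact
  have W: "\<And>a. a \<in> W_R scale \<longleftrightarrow> range (scale a) \<noteq> UNIV" by (simp add: W_R_def)
  have one: "1 \<notin> W_R scale" using W by (auto simp: image_def)
  have unitW: "u \<notin> W_R scale" if "u dvd 1" for u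
  proof -
    from that obtain v where v: "1 = u * v" by (auto elim: dvdE)
    have "x \<in> range (scale u)" for x
      using scale_scale[of u v x] v by (metis rangeI scale_one)
    thus ?thesis using W by blast
  qed
  have IMsub: "subspace (ideal_mult scale I)" for I unfolding ideal_mult_def by simp
  show ?thesis
  proof (intro conjI impI)
    assume allS: "\<forall>s\<in>S. s dvd 1"
    hence nu: "\<And>x. \<not> x dvd 1 \<Longrightarrow> x \<in> W_R scale" unfolding S_def by blast
    show "dual_proper_strong_property_A scale \<longleftrightarrow> dual_property_A scale"
    proof
      assume P: "dual_proper_strong_property_A scale"
      show "dual_property_A scale" unfolding dual_property_A_def
      proof (intro allI impI)
        fix A :: "'r set" assume h: "finite A \<and> gen_ideal A \<subseteq> W_R scale"
        have g: "gen_ideal (insert 0 A) = gen_ideal A" by (rule gi_insert0)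
        have "insert 0 A \<subseteq> W_R scale" using gi_base[of "insert 0 A"] g h by blast
        moreover have "gen_ideal (insert 0 A) \<noteq> UNIV" using g h one by blast
        ultimately have "ideal_mult scale (gen_ideal (insert 0 A)) \<noteq> UNIV"
          using P h unfolding dual_proper_strong_property_A_def by blast
        thus "ideal_mult scale (gen_ideal A) \<noteq> UNIV" using g by simp
      qed
    next
      assume P: "dual_property_A scale"
      show "dual_proper_strong_property_A scale" unfolding dual_proper_strong_property_A_def
      proof (intro allI impI)
        fix A :: "'r set" assume h: "finite A \<and> A \<noteq> {} \<and> A \<subseteq> W_R scale \<and> gen_ideal A \<noteq> UNIV"
        have "gen_ideal A \<subseteq> W_R scale"
        proof
          fix x assume "x \<in> gen_ideal A"
          thus "x \<in> W_R scale" using nu gi_unit h by blast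
        qed
        thus "ideal_mult scale (gen_ideal A) \<noteq> UNIV"
          using P h unfolding dual_property_A_def by blast
      qed
    qed
  next
    assume "\<not> (\<forall>s\<in>S. s dvd 1)"
    then obtain s where s: "s \<notin> W_R scale" "\<not> s dvd 1" unfolding S_def by blast
    have surj: "range (scale s) = UNIV" using s W by blast
    have key: "gen_ideal A \<noteq> UNIV"
      if P: "dual_proper_strong_property_A scale" and h: "finite A" "A \<noteq> {}" "A \<subseteq> W_R scale" for A
    proof
      assume U: "gen_ideal A = UNIV"
      have rs: "range (scale (s * a)) = range (scale a)" for a
      proof -
        have "scale (s * a) m = scale a (scale s m)" for m by (simp add: mult.commute)
        hence "range (scale (s * a)) = scale a ` range (scale s)" by (auto simp: image_def)
        thus ?thesis using surj by simp
      qed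
      have "(*) s ` A \<subseteq> W_R scale" using h(3) rs W by auto
      moreover have "gen_ideal ((*) s ` A) \<noteq> UNIV" using gi_principal s(2) by blast
      ultimately have ne: "ideal_mult scale (gen_ideal ((*) s ` A)) \<noteq> UNIV"
        using P h unfolding dual_proper_strong_property_A_def by blast
      have "s * 1 \<in> gen_ideal ((*) s ` A)" by (rule gi_times) (simp add: U)
      hence "s \<in> gen_ideal ((*) s ` A)" by simp
      hence "range (scale s) \<subseteq> ideal_mult scale (gen_ideal ((*) s ` A))" by (rule im_sub)
      with surj have "UNIV \<subseteq> ideal_mult scale (gen_ideal ((*) s ` A))" by simp
      with ne show False by blast
    qed
    show "dual_proper_strong_property_A scale \<longleftrightarrow> dual_strong_property_A scale"
    proof
      assume P: "dual_proper_strong_property_A scale"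
      show "dual_strong_property_A scale" unfolding dual_strong_property_A_def
      proof (intro allI impI)
        fix A :: "'r set" assume h: "finite A \<and> A \<noteq> {} \<and> A \<subseteq> W_R scale"
        have "gen_ideal A \<noteq> UNIV" by (rule key[OF P]) (use h in auto)
        hence "ideal_mult scale (gen_ideal A) \<noteq> UNIV"
          using P h unfolding dual_proper_strong_property_A_def by blast
        then obtain L where L: "completely_irreducible scale L" "ideal_mult scale (gen_ideal A) \<subseteq> L"
          using exists_ci[OF IMsub] by blast
        have "\<forall>a\<in>A. range (scale a) \<subseteq> L"
        proof
          fix a assume "a \<in> A"
          hence "a \<in> gen_ideal A" using gi_base by blast
          hence "range (scale a) \<subseteq> ideal_mult scale (gen_ideal A)" by (rule im_sub)
          thus "range (scale a) \<subseteq> L" using L(2) by (rule order_trans)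
        qed
        thus "\<exists>L. completely_irreducible scale L \<and> (\<forall>a\<in>A. range (scale a) \<subseteq> L)" using L by blast
      qed
    next
      assume P: "dual_strong_property_A scale"
      show "dual_proper_strong_property_A scale" unfolding dual_proper_strong_property_A_def
      proof (intro allI impI)
        fix A :: "'r set" assume h: "finite A \<and> A \<noteq> {} \<and> A \<subseteq> W_R scale \<and> gen_ideal A \<noteq> UNIV"
        then obtain L where L: "completely_irreducible scale L" "\<forall>a\<in>A. range (scale a) \<subseteq> L"
          using spec[OF P[unfolded dual_strong_property_A_def], of A] h by blast
        have "subspace L" "L \<noteq> UNIV" using L(1) unfolding completely_irreducible_def by auto
        hence "ideal_mult scale (gen_ideal A) \<subseteq> L" using im_gen_sub L(2) by blast
        thus "ideal_mult scale (gen_ideal A) \<noteq> UNIV" using \<open>L \<noteq> UNIV\<close> by auto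
      qed
    qed
  qed
qed

end
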